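(* Let $X$ be a real Banach space and $Q:X^{**}\to X^{**}$ a projection with $Q[X^{**}]=\kappa_X(X)$ such that $\|f\|>\|f-Qf\|$ for every $f\notin\ker Q$. If $G$ is a group acting on $X$ by affine isometries, then $\pi(g)f\in\ker Q$ for every $g\in G$ and $f\in\ker Q$, where $\pi$ acts on $X^{**}$ by the bidual of the linear part of the action.
   Context: $\kappa_X$ is the canonical embedding of $X$ into $X^{**}$. For an action by affine isometries $(g,x)\mapsto gx$, $\pi(g)x:=gx-g0$ is its linear part (an action by linear surjective isometries); it acts on $X^*$ by $(\pi(g)x^* )(x)=x^*(\pi(g^{-1})x)$ and on $X^{**}$ by $(\pi(g)\zeta)(x^* )=\zeta(\pi(g^{-1})x^* )$, extending the action on $X$. *)

theory Defs
  imports "HOL-Analysis.Analysis" "HOL-Algebra.Group"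
begin

definition kappa :: "'a::real_normed_vector \<Rightarrow> (('a \<Rightarrow>\<^sub>L real) \<Rightarrow>\<^sub>L real)" where
  "kappa x = Blinfun (\<lambda>xs. blinfun_apply xs x)"

definition affine_isometry :: "('a::real_normed_vector \<Rightarrow> 'a) \<Rightarrow> bool" where
  "affine_isometry a \<longleftrightarrow>
     (\<exists>L b. linear L \<and> (\<forall>x. a x = L x + b)) \<and> (\<forall>x y. dist (a x) (a y) = dist x y)"

definition lin_part :: "('g \<Rightarrow> 'a::real_normed_vector \<Rightarrow> 'a) \<Rightarrow> 'g \<Rightarrow> 'a \<Rightarrow> 'a" where
  "lin_part act g x = act g x - act g 0"

definition dual_act :: "('g, 'm) monoid_scheme \<Rightarrow> ('g \<Rightarrow> 'a::real_normed_vector \<Rightarrow> 'a) \<Rightarrow> 'g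
    \<Rightarrow> ('a \<Rightarrow>\<^sub>L real) \<Rightarrow> ('a \<Rightarrow>\<^sub>L real)" where
  "dual_act G act g xs = Blinfun (\<lambda>x. blinfun_apply xs (lin_part act (inv\<^bsub>G\<^esub> g) x))"

definition bidual_act :: "('g, 'm) monoid_scheme \<Rightarrow> ('g \<Rightarrow> 'a::real_normed_vector \<Rightarrow> 'a) \<Rightarrow> 'g
    \<Rightarrow> (('a \<Rightarrow>\<^sub>L real) \<Rightarrow>\<^sub>L real) \<Rightarrow> (('a \<Rightarrow>\<^sub>L real) \<Rightarrow>\<^sub>L real)" where
  "bidual_act G act g z = Blinfun (\<lambda>xs. blinfun_apply z (dual_act G act (inv\<^bsub>G\<^esub> g) xs))"

end

theory Submission
  imports Defs
begin

theorem lemma3p5: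
  fixes Q :: "(('a::banach \<Rightarrow>\<^sub>L real) \<Rightarrow>\<^sub>L real) \<Rightarrow>\<^sub>L (('a \<Rightarrow>\<^sub>L real) \<Rightarrow>\<^sub>L real)"
    and G :: "('g, 'm) monoid_scheme"
    and act :: "'g \<Rightarrow> 'a \<Rightarrow> 'a"
  assumes proj: "\<And>f. Q (Q f) = Q f"
    and range_Q: "range (blinfun_apply Q) = range kappa"
    and strict: "\<And>f. Q f \<noteq> 0 \<Longrightarrow> norm f > norm (f - Q f)"
    and grp: "group G"
    and aff: "\<And>g. g \<in> carrier G \<Longrightarrow> affine_isometry (act g)"
    and act_one: "act \<one>\<^bsub>G\<^esub> = id"
    and act_mult: "\<And>g h. g \<in> carrier G \<Longrightarrow> h \<in> carrier G \<Longrightarrow> act (g \<otimes>\<^bsub>G\<^esub> h) = act g \<circ> act h"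
  shows "\<forall>g \<in> carrier G. \<forall>f. Q f = 0 \<longrightarrow> Q (bidual_act G act g f) = 0"
proof (intro ballI allI impI)
  fix g f assume g: "g \<in> carrier G" and f0: "Q f = 0"
  define P where "P = lin_part act"
  have invc: "inv\<^bsub>G\<^esub> h \<in> carrier G" if "h \<in> carrier G" for h
    using grp that by (simp add: group.inv_closed)
  have invinv: "inv\<^bsub>G\<^esub> (inv\<^bsub>G\<^esub> h) = h" if "h \<in> carrier G" for h
    using grp that by (simp add: group.inv_inv)
  have Pmul: "P (h \<otimes>\<^bsub>G\<^esub> k) x = P h (P k x)" if hk: "h \<in> carrier G" "k \<in> carrier G" for h k x
  proof -
    obtain L b where L: "linear L" "\<forall>x. act h x = L x + b"
      using aff[OF hk(1)] unfolding affine_isometry_def by blast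
    show ?thesis unfolding P_def lin_part_def using act_mult[OF hk] L
      by (simp add: linear_diff[OF L(1)] linear_0[OF L(1)])
  qed
  have Pone: "P \<one>\<^bsub>G\<^esub> x = x" for x unfolding P_def lin_part_def act_one by simp
  have Pinv: "P h (P (inv\<^bsub>G\<^esub> h) x) = x" if "h \<in> carrier G" for h x
    using Pmul[of h "inv\<^bsub>G\<^esub> h" x] that invc[OF that] grp by (simp add: group.r_inv Pone)
  have Pbl: "bounded_linear (P h)" and Pnorm: "norm (P h x) = norm x" if hc: "h \<in> carrier G" for h x
  proof -
    obtain L b where L: "linear L" "\<forall>x. act h x = L x + b" and d: "\<forall>x y. dist (act h x) (act h y) = dist x y"
      using aff[OF hc] unfolding affine_isometry_def by blast
    have PL: "P h = L" unfolding P_def lin_part_def using L by (auto simp: linear_0[OF L(1)])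
    have nL: "norm (L x) = norm x" for x
      using d[rule_format, of x 0] L by (simp add: dist_norm linear_0[OF L(1)])
    show "norm (P h x) = norm x" using PL nL by simp
    show "bounded_linear (P h)" unfolding PL
      by (rule bounded_linear_intro[where K=1])
        (auto simp: linear_add[OF L(1)] linear_scale[OF L(1)] nL)
  qed
  have Dapp: "blinfun_apply (dual_act G act h xs) = (\<lambda>x. xs (P (inv\<^bsub>G\<^esub> h) x))"
    if "h \<in> carrier G" for h xs
    unfolding dual_act_def P_def[symmetric]
    by (rule bounded_linear_Blinfun_apply[OF bounded_linear_compose[OF blinfun.bounded_linear_right Pbl[OF invc[OF that]]]])
  have Dnorm: "norm (dual_act G act h xs) \<le> norm xs" if "h \<in> carrier G" for h xs
  proof (rule norm_blinfun_bound)
    show "0 \<le> norm xs" by simp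
    fix x show "norm (dual_act G act h xs x) \<le> norm xs * norm x"
      using norm_blinfun[of xs "P (inv\<^bsub>G\<^esub> h) x"] Pnorm[OF invc[OF that]]
      by (simp add: Dapp[OF that])
  qed
  have Dbl: "bounded_linear (dual_act G act h)" if "h \<in> carrier G" for h
  proof (rule bounded_linear_intro[where K=1])
    fix a c :: "'a \<Rightarrow>\<^sub>L real"
    show "dual_act G act h (a + c) = dual_act G act h a + dual_act G act h c"
      by (rule blinfun_eqI) (simp add: Dapp[OF that] blinfun.add_left)
  next
    fix r and a :: "'a \<Rightarrow>\<^sub>L real"
    show "dual_act G act h (r *\<^sub>R a) = r *\<^sub>R dual_act G act h a"
      by (rule blinfun_eqI) (simp add: Dapp[OF that] blinfun.scaleR_left)
  next
    fix a :: "'a \<Rightarrow>\<^sub>L real"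
    show "norm (dual_act G act h a) \<le> norm a * 1" using Dnorm[OF that] by simp
  qed
  have Tapp: "blinfun_apply (bidual_act G act h z) = (\<lambda>xs. z (dual_act G act (inv\<^bsub>G\<^esub> h) xs))"
    if "h \<in> carrier G" for h z
    unfolding bidual_act_def
    by (rule bounded_linear_Blinfun_apply[OF bounded_linear_compose[OF blinfun.bounded_linear_right Dbl[OF invc[OF that]]]])
  have Tdiff: "bidual_act G act h (a - c) = bidual_act G act h a - bidual_act G act h c"
    if "h \<in> carrier G" for h a c
    by (rule blinfun_eqI) (simp add: Tapp[OF that] blinfun.diff_left)
  have Tle: "norm (bidual_act G act h z) \<le> norm z" if "h \<in> carrier G" for h z
  proof (rule norm_blinfun_bound)
    show "0 \<le> norm z" by simp
    fix xs
    have "norm (z (dual_act G act (inv\<^bsub>G\<^esub> h) xs)) \<le> norm z * norm (dual_act G act (inv\<^bsub>G\<^esub> h) xs)"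
      by (rule norm_blinfun)
    also have "\<dots> \<le> norm z * norm xs"
      by (rule mult_left_mono[OF Dnorm[OF invc[OF that]]]) simp
    finally show "norm (bidual_act G act h z xs) \<le> norm z * norm xs"
      by (simp add: Tapp[OF that])
  qed
  have TT: "bidual_act G act (inv\<^bsub>G\<^esub> h) (bidual_act G act h z) = z" if "h \<in> carrier G" for h z
  proof (rule blinfun_eqI)
    fix xs
    have "dual_act G act (inv\<^bsub>G\<^esub> h) (dual_act G act h xs) = xs"
      by (rule blinfun_eqI)
        (use Pinv[OF invc[OF that]] in \<open>simp add: Dapp[OF that] Dapp[OF invc[OF that]] invinv[OF that]\<close>)
    then show "bidual_act G act (inv\<^bsub>G\<^esub> h) (bidual_act G act h z) xs = z xs"
      by (simp add: Tapp[OF that] Tapp[OF invc[OF that]] invinv[OF that])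
  qed
  have Tnorm: "norm (bidual_act G act g z) = norm z" for z
    using Tle[OF g, of z] Tle[OF invc[OF g], of "bidual_act G act g z"] TT[OF g, of z] by simp
  have kapp: "blinfun_apply (kappa y) = (\<lambda>xs. blinfun_apply xs y)" for y :: 'a
    unfolding kappa_def by (rule bounded_linear_Blinfun_apply[OF blinfun.bounded_linear_left])
  have Tk: "bidual_act G act g (kappa (P (inv\<^bsub>G\<^esub> g) x)) = kappa x" for x
    by (rule blinfun_eqI)
      (simp add: Tapp[OF g] kapp Dapp[OF invc[OF g]] invinv[OF g] Pinv[OF g])
  show "Q (bidual_act G act g f) = 0"
  proof (rule ccontr)
    define h where "h = bidual_act G act g f"
    assume "Q (bidual_act G act g f) \<noteq> 0"
    hence Qh: "Q h \<noteq> 0" by (simp add: h_def)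
    have "Q h \<in> range kappa" using range_Q by blast
    then obtain x where x: "Q h = kappa x" by blast
    define y where "y = kappa (P (inv\<^bsub>G\<^esub> g) x)"
    have Ty: "bidual_act G act g y = Q h" using Tk x by (simp add: y_def)
    have "y \<in> range (blinfun_apply Q)" using range_Q by (simp add: y_def)
    then obtain u where u: "y = Q u" by blast
    have Qy: "Q y = y" using u proj by simp
    have T0: "bidual_act G act g 0 = 0" using Tdiff[OF g, of 0 0] by simp
    have y0: "y \<noteq> 0" using Ty T0 Qh by auto
    have "norm f > norm (f - y)"
    proof -
      have "norm h > norm (h - Q h)" using strict Qh by blast
      moreover have "h - Q h = bidual_act G act g (f - y)" using Tdiff[OF g] Ty h_def by simp
      ultimately show ?thesis using Tnorm h_def by simp
    qed
    moreover have "norm (f - y) > norm f"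
    proof -
      have Qd: "Q (f - y) = - y" using f0 Qy by (simp add: blinfun.diff_right)
      hence "Q (f - y) \<noteq> 0" using y0 by simp
      hence "norm (f - y) > norm (f - y - Q (f - y))" by (rule strict)
      thus ?thesis using Qd by simp
    qed
    ultimately show False by simp
  qed
qed

end
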